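(* Let $\lambda\ge 1$. There exists a probability measure $\nu_\lambda$ supported on $[-2,2]$ such that for all real $z>2$ $$\int_{\mathbb{R}}\frac{\nu_\lambda(dx)}{z-x}=T_\lambda(z):=G(z)^{1-1/\lambda}\,\big(z^2-4\big)^{-1/(2\lambda)}=\exp\left(-\int_{\mathbb{R}}\log(z-x)\,\tau_\lambda(dx)\right),$$ where $\tau_\lambda(dx)=(1-\frac1\lambda)\frac{\mathbf 1_{[-2,2]}(x)dx}{\pi\sqrt{4-x^2}}+\frac1\lambda\frac{\delta_{-2}+\delta_2}{2}(dx)$. Moreover $\nu_\lambda$ is absolutely continuous with density proportional to $$\cos\!\Big[\Big(1-\frac1\lambda\Big)\arcsin\frac x2\Big]\,(4-x^2)^{-1/(2\lambda)}\,\mathbf 1_{(-2,2)}(x).$$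
   Context: $G(z)=\frac{z-\sqrt{z^2-4}}{2}$ is the Cauchy–Stieltjes transform of the standard Wigner law (positive for real $z>2$); $1/\sqrt{z^2-4}$ is the Cauchy–Stieltjes transform of the arcsine law $\frac{dx}{\pi\sqrt{4-x^2}}$ on $[-2,2]$. $\delta_a$ is the Dirac mass at $a$. *)

theory Defs
  imports "HOL-Probability.Probability"
begin

text \<open>Cauchy--Stieltjes transform of the standard Wigner law (branch positive for real z > 2).\<close>
definition G :: "real \<Rightarrow> real" where
  "G z = (z - sqrt (z\<^sup>2 - 4)) / 2"

definition arcsine_dens :: "real \<Rightarrow> real" where
  "arcsine_dens x = indicator {-2..2} x / (pi * sqrt (4 - x\<^sup>2))"

definition T :: "real \<Rightarrow> real \<Rightarrow> real" where
  "T lam z = G z powr (1 - 1 / lam) * (z\<^sup>2 - 4) powr (- 1 / (2 * lam))"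

definition tau :: "real \<Rightarrow> real measure" where
  "tau lam = measure_of UNIV (sets borel)
     (\<lambda>A. ennreal (1 - 1 / lam) * (\<integral>\<^sup>+ x. ennreal (arcsine_dens x) * indicator A x \<partial>lborel)
          + ennreal (1 / lam) * ((indicator A (-2) + indicator A 2) / 2))"

definition nu_dens :: "real \<Rightarrow> real \<Rightarrow> real" where
  "nu_dens lam x = cos ((1 - 1 / lam) * arcsin (x / 2)) * (4 - x\<^sup>2) powr (- 1 / (2 * lam))
                   * indicator {-2<..<2} x"

end

theory Submission
  imports Defs
begin


definition pw :: "real \<Rightarrow> real \<Rightarrow> real" where
  "pw a t = (2 * cos t) powr a"

definition K :: "real \<Rightarrow> real \<Rightarrow> real" where
  "K a b = integral {-pi/2..pi/2} (\<lambda>t. pw a t * cos (b * t))"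

lemma cos_nonneg_half: "t \<in> {-pi/2..pi/2} \<Longrightarrow> cos t \<ge> 0"
  by (auto intro!: cos_ge_zero)

lemma cos_pos_half: "t \<in> {-pi/2<..<pi/2} \<Longrightarrow> cos t > 0"
  by (auto intro!: cos_gt_zero_pi)

lemma pw_integrable:
  assumes "0 \<le> a"
  shows "(\<lambda>t. pw a t * cos (b * t)) integrable_on {-pi/2..pi/2}"
proof (cases "a = 0")
  case True
  have "(\<lambda>t. cos (b * t)) integrable_on {-pi/2..pi/2}"
    by (intro integrable_continuous_interval continuous_intros)
  then show ?thesis
  proof (rule integrable_spike_finite[where S="{-pi/2, pi/2}", rotated 2])
    fix t assume t: "t \<in> {-pi/2..pi/2} - {-pi/2, pi/2}"
    then have "cos t > 0" using cos_pos_half[of t] by auto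
    then show "pw a t * cos (b * t) = cos (b * t)" using True by (simp add: pw_def)
  qed simp
next
  case False
  then have "a > 0" using assms by simp
  show ?thesis unfolding pw_def
    by (intro integrable_continuous_interval continuous_intros continuous_on_powr')
       (use \<open>a > 0\<close> cos_nonneg_half in auto)
qed

lemma K_rec:
  assumes "0 \<le> a"
  shows "m * K a (a + 2*m) + (a + m + 1) * K a (a + 2*m + 2) = 0"
proof -
  define \<beta> where "\<beta> = a + 1 + 2*m"
  define G where "G t = (2 * cos t) powr (a+1) * sin (\<beta> * t)" for t
  define G' where "G' t = 2*m * (pw a t * cos ((a + 2*m) * t)) + 2*(a+m+1) * (pw a t * cos ((a + 2*m + 2) * t))" for t
  have contG: "continuous_on {-pi/2..pi/2} G" unfolding G_def
    by (intro continuous_intros continuous_on_powr') (use assms cos_nonneg_half in auto)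
  have derG: "(G has_vector_derivative G' t) (at t)" if t: "t \<in> {-pi/2<..<pi/2}" for t
  proof -
    have c: "cos t > 0" using cos_pos_half[OF t] .
    have e0: "(cos t * 2) powr (1 + a) = cos t * 2 * (cos t * 2) powr a"
      using c by (simp add: powr_add)
    have "(G has_real_derivative
        ((a+1) * pw a t * (- 2 * sin t) * sin (\<beta> * t)
         + pw a t * (2 * cos t) * (cos (\<beta> * t) * \<beta>))) (at t)"
      unfolding G_def using c
      by (intro derivative_eq_intros DERIV_powr) (auto simp: field_simps pw_def e0)
    moreover have "((a+1) * pw a t * (- 2 * sin t) * sin (\<beta> * t)
         + pw a t * (2 * cos t) * (cos (\<beta> * t) * \<beta>)) = G' t"
    proof -
      have c1: "cos ((a + 2*m) * t) = cos (\<beta> * t) * cos t + sin (\<beta> * t) * sin t"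
        using cos_diff[of "\<beta>*t" t] by (simp add: \<beta>_def algebra_simps)
      have c2: "cos ((a + 2*m + 2) * t) = cos (\<beta> * t) * cos t - sin (\<beta> * t) * sin t"
        using cos_add[of "\<beta>*t" t] by (simp add: \<beta>_def algebra_simps)
      show ?thesis unfolding G'_def c1 c2
        by (simp add: algebra_simps \<beta>_def)
    qed
    ultimately show ?thesis by (simp add: has_real_derivative_iff_has_vector_derivative)
  qed
  have "(G' has_integral (G (pi/2) - G (-pi/2))) {-pi/2..pi/2}"
    by (rule fundamental_theorem_of_calculus_interior[OF _ contG derG]) auto
  moreover have "G (pi/2) = 0" "G (-pi/2) = 0" by (auto simp: G_def)
  ultimately have "(G' has_integral 0) {-pi/2..pi/2}" by simp
  moreover have "(G' has_integral (2*m * K a (a + 2*m) + 2*(a+m+1) * K a (a + 2*m + 2))) {-pi/2..pi/2}"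
    unfolding G'_def K_def
    by (intro has_integral_add has_integral_mult_right integrable_integral pw_integrable assms)
  ultimately have "2*m * K a (a + 2*m) + 2*(a+m+1) * K a (a + 2*m + 2) = 0"
    using has_integral_unique by blast
  then have "2 * (m * K a (a + 2*m) + (a + m + 1) * K a (a + 2*m + 2)) = 0"
    by (simp add: algebra_simps)
  then show ?thesis by simp
qed

lemma K_up:
  assumes "0 \<le> a"
  shows "K a (a + 2 * real (Suc n)) = 0"
proof (induction n)
  case 0
  from K_rec[OF assms, of 0] have "(a + 1) * K a (a + 2) = 0" by simp
  then show ?case using assms by simp
next
  case (Suc n)
  from K_rec[OF assms, of "real (Suc n)"] Suc
  have "(a + real (Suc n) + 1) * K a (a + 2 * real (Suc n) + 2) = 0" by simp
  moreover have "a + real (Suc n) + 1 > 0" using assms by simp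
  ultimately have "K a (a + 2 * real (Suc n) + 2) = 0" by simp
  then show ?case by (simp add: algebra_simps)
qed

lemma K_down:
  assumes "0 \<le> a"
  shows "K a (a - 2 * real n) = (a gchoose n) * K a a"
proof (induction n)
  case 0
  then show ?case by simp
next
  case (Suc n)
  from K_rec[OF assms, of "- real (Suc n)"]
  have "- real (Suc n) * K a (a - 2 * real (Suc n)) + (a - real n) * K a (a - 2 * real n) = 0"
    by (simp add: algebra_simps)
  then have "real (Suc n) * K a (a - 2 * real (Suc n)) = (a - real n) * ((a gchoose n) * K a a)"
    using Suc by (simp add: algebra_simps)
  also have "\<dots> = real (Suc n) * (a gchoose Suc n) * K a a"
  proof -
    have h0: "a * (a gchoose n) = real n * (a gchoose n) + real (Suc n) * (a gchoose Suc n)"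
      by (rule gbinomial_mult_1)
    have h: "(a - real n) * (a gchoose n) = real (Suc n) * (a gchoose Suc n)"
      using h0 by (simp only: left_diff_distrib)
    show ?thesis using h by (metis mult.assoc)
  qed
  finally show ?case by simp
qed



lemma subst_meas:
  fixes d :: "real \<Rightarrow> real"
  assumes dm[measurable]: "d \<in> borel_measurable borel" and dpos: "\<And>x. d x \<ge> 0"
    and d0: "\<And>x. x \<notin> {-2<..<2} \<Longrightarrow> d x = 0"
  shows "density lborel (\<lambda>x. ennreal (d x)) = distr (density lborel (\<lambda>t. ennreal (d (2 * sin t) * (2 * cos t) * indicator {-pi/2<..<pi/2} t))) lborel (\<lambda>t. 2 * sin t)"
proof (rule measure_eqI)
  show "sets (density lborel (\<lambda>x. ennreal (d x))) = sets (distr (density lborel (\<lambda>t. ennreal (d (2 * sin t) * (2 * cos t) * indicator {-pi/2<..<pi/2} t))) lborel (\<lambda>t. 2 * sin t))"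
    by simp
next
  fix A assume "A \<in> sets (density lborel (\<lambda>x. ennreal (d x)))"
  then have A[measurable]: "A \<in> sets borel" by simp
  have "emeasure (density lborel (\<lambda>x. ennreal (d x))) A = (\<integral>\<^sup>+x. ennreal (d x) * indicator A x \<partial>lborel)"
    by (simp add: emeasure_density)
  also have "\<dots> = (\<integral>\<^sup>+x. ennreal (d x * indicator A x * indicator {2 * sin (-pi/2)..2 * sin (pi/2)} x) \<partial>lborel)"
    by (intro nn_integral_cong) (auto split: split_indicator simp: d0)
  also have "\<dots> = (\<integral>\<^sup>+t. ennreal (d (2 * sin t) * indicator A (2 * sin t) * (2 * cos t) * indicator {-pi/2..pi/2} t) \<partial>lborel)"
    by (rule nn_integral_substitution)
      (auto intro!: derivative_eq_intros continuous_intros cos_ge_zero simp: set_borel_measurable_def)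
  also have "\<dots> = (\<integral>\<^sup>+t. ennreal (d (2 * sin t) * (2 * cos t) * indicator {-pi/2<..<pi/2} t) * indicator ((\<lambda>t. 2 * sin t) -` A) t \<partial>lborel)"
  proof (intro nn_integral_cong)
    fix t :: real
    show "ennreal (d (2 * sin t) * indicator A (2 * sin t) * (2 * cos t) * indicator {-pi/2..pi/2} t) =
      ennreal (d (2 * sin t) * (2 * cos t) * indicator {-pi/2<..<pi/2} t) * indicator ((\<lambda>t. 2 * sin t) -` A) t"
    proof (cases "t = pi/2 \<or> t = -pi/2")
      case True
      then have "t = pi/2 \<or> t = -(pi/2)" by auto
      moreover have "sin (pi/2) = 1" "sin (-(pi/2)) = -1" by simp_all
      ultimately have "2 * sin t = 2 \<or> 2 * sin t = -2" by (metis mult.right_neutral mult_minus1_right)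
      then have "d (2 * sin t) = 0" using d0 by (metis greaterThanLessThan_iff less_irrefl)
      then show ?thesis by simp
    next
      case False
      then show ?thesis by (auto split: split_indicator)
    qed
  qed
  also have "\<dots> = emeasure (distr (density lborel (\<lambda>t. ennreal (d (2 * sin t) * (2 * cos t) * indicator {-pi/2<..<pi/2} t))) lborel (\<lambda>t. 2 * sin t)) A"
  proof -
    have pre: "(\<lambda>t. 2 * sin t) -` A \<in> sets lborel"
      using measurable_sets[of "\<lambda>t::real. 2 * sin t" lborel borel A] A by auto
    have "emeasure (density lborel (\<lambda>t. ennreal (d (2 * sin t) * (2 * cos t) * indicator {-pi/2<..<pi/2} t))) ((\<lambda>t. 2 * sin t) -` A)
      = (\<integral>\<^sup>+t. ennreal (d (2 * sin t) * (2 * cos t) * indicator {-pi/2<..<pi/2} t) * indicator ((\<lambda>t. 2 * sin t) -` A) t \<partial>lborel)"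
      by (rule emeasure_density) (use pre in auto)
    then show ?thesis by (simp add: emeasure_distr)
  qed
  finally show "emeasure (density lborel (\<lambda>x. ennreal (d x))) A = emeasure (distr (density lborel (\<lambda>t. ennreal (d (2 * sin t) * (2 * cos t) * indicator {-pi/2<..<pi/2} t))) lborel (\<lambda>t. 2 * sin t)) A" .
qed



definition Wf :: "real \<Rightarrow> real \<Rightarrow> real" where
  "Wf a t = pw a t * cos (a * t)"

lemma pw_meas[measurable]: "(\<lambda>t. pw a t) \<in> borel_measurable borel"
  unfolding pw_def by measurable

lemma Wf_meas[measurable]: "(\<lambda>t. Wf a t) \<in> borel_measurable borel"
  unfolding Wf_def by measurable

lemma pw_bounds:
  assumes "0 \<le> a" "a < 1" "t \<in> {-pi/2..pi/2}"
  shows "0 \<le> pw a t" "pw a t \<le> 2"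
proof -
  show "0 \<le> pw a t" by (simp add: pw_def)
  have c: "0 \<le> 2 * cos t" "2 * cos t \<le> 2" using cos_nonneg_half[OF assms(3)] by auto
  have "pw a t \<le> 2 powr a" unfolding pw_def by (rule powr_mono2) (use assms c in auto)
  also have "\<dots> \<le> 2 powr 1" by (rule powr_mono) (use assms in auto)
  finally show "pw a t \<le> 2" by simp
qed

lemma Wf_nonneg:
  assumes "0 \<le> a" "a < 1" "t \<in> {-pi/2..pi/2}"
  shows "0 \<le> Wf a t"
proof -
  have "\<bar>a * t\<bar> \<le> pi/2"
  proof -
    have "\<bar>a * t\<bar> = a * \<bar>t\<bar>" using assms by (simp add: abs_mult)
    also have "\<dots> \<le> 1 * \<bar>t\<bar>" by (rule mult_right_mono) (use assms in auto)
    finally show ?thesis using assms(3) by auto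
  qed
  then have "cos (a * t) \<ge> 0" by (intro cos_ge_zero) auto
  then show ?thesis unfolding Wf_def using pw_bounds[OF assms] by simp
qed

lemma Wf_bound:
  assumes "0 \<le> a" "a < 1" "t \<in> {-pi/2..pi/2}"
  shows "\<bar>Wf a t\<bar> \<le> 2"
proof -
  have "\<bar>Wf a t\<bar> = pw a t * \<bar>cos (a * t)\<bar>" unfolding Wf_def using pw_bounds[OF assms] by (simp add: abs_mult)
  also have "\<dots> \<le> 2 * 1" by (intro mult_mono) (use pw_bounds[OF assms] in auto)
  finally show ?thesis by simp
qed

lemma Wf_end: "Wf a (pi/2) = 0" "Wf a (-(pi/2)) = 0"
  by (simp_all add: Wf_def pw_def)

lemma int_conv:
  fixes f :: "real \<Rightarrow> real"
  assumes [measurable]: "f \<in> borel_measurable borel" and B: "\<And>t. t \<in> {-pi/2..pi/2} \<Longrightarrow> \<bar>f t\<bar> \<le> B"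
    and a: "0 \<le> a" "a < 1"
  shows "integrable lborel (\<lambda>t. Wf a t * indicator {-pi/2..pi/2} t * f t)"
    and "(\<integral>t. Wf a t * indicator {-pi/2..pi/2} t * f t \<partial>lborel) = integral {-pi/2..pi/2} (\<lambda>t. Wf a t * f t)"
proof -
  show int: "integrable lborel (\<lambda>t. Wf a t * indicator {-pi/2..pi/2} t * f t)"
  proof (rule integrableI_bounded_set[where A="{-pi/2..pi/2}" and B="2*B"])
    show "AE x in lborel. x \<in> {-pi/2..pi/2} \<longrightarrow> norm (Wf a x * indicator {-pi/2..pi/2} x * f x) \<le> 2 * B"
    proof (intro AE_I2 impI)
      fix x :: real assume x: "x \<in> {-pi/2..pi/2}"
      have "\<bar>Wf a x * f x\<bar> \<le> 2 * B"
        unfolding abs_mult by (intro mult_mono Wf_bound B a x) auto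
      then show "norm (Wf a x * indicator {-pi/2..pi/2} x * f x) \<le> 2 * B" using x by simp
    qed
  qed auto
  define L where "L = (\<integral>t. Wf a t * indicator {-pi/2..pi/2} t * f t \<partial>lborel)"
  have h: "((\<lambda>t. Wf a t * indicator {-pi/2..pi/2} t * f t) has_integral L) UNIV"
    unfolding L_def by (rule has_integral_integral_lborel[OF int])
  have eq: "(\<lambda>t. Wf a t * indicator {-pi/2..pi/2} t * f t) = (\<lambda>t. if t \<in> {-pi/2..pi/2} then Wf a t * f t else 0)"
    by (auto simp: indicator_def)
  from h have "((\<lambda>t. if t \<in> {-pi/2..pi/2} then Wf a t * f t else 0) has_integral L) UNIV"
    unfolding eq .
  then have "((\<lambda>t. Wf a t * f t) has_integral L) {-pi/2..pi/2}"
    by (simp only: has_integral_restrict_UNIV)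
  then show "(\<integral>t. Wf a t * indicator {-pi/2..pi/2} t * f t \<partial>lborel) = integral {-pi/2..pi/2} (\<lambda>t. Wf a t * f t)"
    unfolding L_def[symmetric] by (simp add: integral_unique)
qed

lemma Wf_cos_integrable:
  assumes "0 \<le> a"
  shows "(\<lambda>t. Wf a t * cos (b * t)) integrable_on {-pi/2..pi/2}"
proof -
  have "(\<lambda>t. (pw a t * cos ((a + b) * t) + pw a t * cos ((a - b) * t)) / 2) integrable_on {-pi/2..pi/2}"
    by (intro integrable_on_divide integrable_add pw_integrable assms)
  moreover have "(\<lambda>t. (pw a t * cos ((a + b) * t) + pw a t * cos ((a - b) * t)) / 2) = (\<lambda>t. Wf a t * cos (b * t))"
    by (auto simp: Wf_def cos_times_cos algebra_simps)
  ultimately show ?thesis by simp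
qed

lemma Wf_fourier:
  assumes "0 \<le> a"
  shows "integral {-pi/2..pi/2} (\<lambda>t. Wf a t * cos (2 * real n * t)) = (if n = 0 then K a a else (a gchoose n) / 2 * K a a)"
proof (cases n)
  case 0
  then show ?thesis by (simp add: Wf_def K_def)
next
  case (Suc m)
  have "integral {-pi/2..pi/2} (\<lambda>t. Wf a t * cos (2 * real n * t))
      = integral {-pi/2..pi/2} (\<lambda>t. (pw a t * cos ((a + 2 * real n) * t) + pw a t * cos ((a - 2 * real n) * t)) / 2)"
    by (rule integral_cong) (auto simp: Wf_def cos_times_cos algebra_simps)
  also have "\<dots> = (K a (a + 2 * real n) + K a (a - 2 * real n)) / 2"
    unfolding K_def
    by (intro integral_unique has_integral_divide has_integral_add integrable_integral pw_integrable assms)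
  also have "\<dots> = (a gchoose n) / 2 * K a a"
    using K_up[OF assms, of m] K_down[OF assms, of n] Suc by simp
  finally show ?thesis using Suc by simp
qed



lemma G_facts:
  assumes "z > 2"
  shows "0 < G z" "G z < 1" "G z + 1 / G z = z" "sqrt (z\<^sup>2 - 4) = 1 / G z - G z"
proof -
  define s where "s = sqrt (z\<^sup>2 - 4)"
  have zz: "2 * 2 < z * z" by (rule mult_strict_mono) (use assms in auto)
  have s0: "0 < s" unfolding s_def using zz by (simp add: power2_eq_square)
  have ss: "s\<^sup>2 = z\<^sup>2 - 4" unfolding s_def using zz by (simp add: power2_eq_square)
  have sz: "s < z"
  proof -
    have "s\<^sup>2 < z\<^sup>2" using ss by simp
    then show ?thesis using s0 assms by (smt (verit) power_mono)
  qed
  have g: "G z = (z - s) / 2" by (simp add: G_def s_def)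
  show g0: "0 < G z" using g sz by simp
  have "z - 2 < s"
  proof -
    have "(z - 2)\<^sup>2 < s\<^sup>2" using ss assms by (simp add: power2_eq_square algebra_simps)
    then show ?thesis using s0 by (smt (verit) power_mono)
  qed
  then show "G z < 1" using g by simp
  have inv: "1 / G z = (z + s) / 2"
  proof -
    have "(z - s) * (z + s) = 4" using ss by (simp add: power2_eq_square algebra_simps)
    then have "G z * ((z + s) / 2) = 1" unfolding g by (simp add: field_simps)
    then show ?thesis using g0 by (simp add: field_simps)
  qed
  show "G z + 1 / G z = z" using g inv by simp
  show "sqrt (z\<^sup>2 - 4) = 1 / G z - G z" using g inv s_def by simp
qed

lemma cos_series:
  fixes r :: real
  assumes "\<bar>r\<bar> < 1"
  shows "(\<lambda>n. r ^ n * cos (real n * \<phi>)) sums ((1 - r * cos \<phi>) / (1 - 2 * r * cos \<phi> + r\<^sup>2))"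
proof -
  define w where "w = complex_of_real r * cis \<phi>"
  have nw: "norm w < 1" using assms by (simp add: w_def norm_mult)
  have "(\<lambda>n. w ^ n) sums (1 / (1 - w))" by (rule geometric_sums[OF nw])
  then have "(\<lambda>n. Re (w ^ n)) sums Re (1 / (1 - w))" by (simp add: sums_complex_iff)
  moreover have "Re (w ^ n) = r ^ n * cos (real n * \<phi>)" for n
  proof -
    have "Re (cis \<phi> ^ n) = cos (real n * \<phi>)" by (simp add: cis_power_int flip: power_int_of_nat)
    then show ?thesis by (simp add: w_def power_mult_distrib)
  qed
  moreover have "Re (1 / (1 - w)) = (1 - r * cos \<phi>) / (1 - 2 * r * cos \<phi> + r\<^sup>2)"
  proof -
    have "Re (1 / (1 - w)) = (1 - r * cos \<phi>) / ((1 - r * cos \<phi>)\<^sup>2 + (r * sin \<phi>)\<^sup>2)"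
      by (simp add: Re_divide w_def)
    also have "(1 - r * cos \<phi>)\<^sup>2 + (r * sin \<phi>)\<^sup>2 = 1 - 2 * r * cos \<phi> + r\<^sup>2"
    proof -
      have h: "cos \<phi> * cos \<phi> + sin \<phi> * sin \<phi> = 1" using sin_cos_squared_add[of \<phi>] by (simp add: power2_eq_square)
      show ?thesis unfolding power2_eq_square using h by algebra
    qed
    finally show ?thesis by simp
  qed
  ultimately show ?thesis by simp
qed

lemma cauchy_series:
  assumes q: "0 < q" "q < 1"
  shows "(\<lambda>n. (if n = 0 then 1 else 2) * (-q) ^ n * cos (2 * real n * t)) sums ((1 - q\<^sup>2) / (1 + 2 * q * cos (2 * t) + q\<^sup>2))"
proof -
  have "(\<lambda>n. (-q) ^ n * cos (real n * (2 * t))) sums ((1 + q * cos (2 * t)) / (1 + 2 * q * cos (2 * t) + q\<^sup>2))"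
    using cos_series[of "-q" "2 * t"] q by simp
  then have s: "(\<lambda>n. (-q) ^ n * cos (2 * real n * t)) sums ((1 + q * cos (2 * t)) / (1 + 2 * q * cos (2 * t) + q\<^sup>2))"
    by (simp add: mult_ac)
  have "(\<lambda>n. 2 * ((-q) ^ n * cos (2 * real n * t)) - (if n = 0 then (-q) ^ n * cos (2 * real n * t) else 0))
     sums (2 * ((1 + q * cos (2 * t)) / (1 + 2 * q * cos (2 * t) + q\<^sup>2)) - (-q) ^ 0 * cos (2 * real 0 * t))"
    by (intro sums_diff sums_mult s sums_single)
  moreover have "(\<lambda>n. 2 * ((-q) ^ n * cos (2 * real n * t)) - (if n = 0 then (-q) ^ n * cos (2 * real n * t) else 0))
      = (\<lambda>n. (if n = 0 then 1 else 2) * (-q) ^ n * cos (2 * real n * t))"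
    by auto
  moreover have "1 + 2 * q * cos (2 * t) + q\<^sup>2 > 0"
  proof -
    have "1 + 2 * q * cos (2 * t) + q\<^sup>2 \<ge> 1 - 2 * q + q\<^sup>2"
    proof -
      have "q * cos (2 * t) \<ge> q * (-1)" using cos_ge_minus_one[of "2*t"] q by (intro mult_left_mono) auto
      then show ?thesis by simp
    qed
    moreover have "1 - 2 * q + q\<^sup>2 = (1 - q)\<^sup>2" by (simp add: power2_eq_square algebra_simps)
    moreover have "(1 - q)\<^sup>2 > 0" using q by simp
    ultimately show ?thesis by linarith
  qed
  moreover have "2 * ((1 + q * cos (2 * t)) / (1 + 2 * q * cos (2 * t) + q\<^sup>2)) - (-q) ^ 0 * cos (2 * real 0 * t)
     = (1 - q\<^sup>2) / (1 + 2 * q * cos (2 * t) + q\<^sup>2)"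
    using calculation(3) by (simp add: field_simps power2_eq_square)
  ultimately show ?thesis by simp
qed

lemma sums_int_gen:
  fixes w :: "real \<Rightarrow> real" and \<phi> :: "nat \<Rightarrow> real \<Rightarrow> real"
  assumes wm[measurable]: "w \<in> borel_measurable borel" and wb: "\<And>t. \<bar>w t\<bar> \<le> W"
    and w0: "\<And>t. t \<notin> {-pi/2..pi/2} \<Longrightarrow> w t = 0"
    and \<phi>m[measurable]: "\<And>n. \<phi> n \<in> borel_measurable borel"
    and \<phi>b: "\<And>n t. t \<in> {-pi/2..pi/2} \<Longrightarrow> \<bar>\<phi> n t\<bar> \<le> M * q ^ n"
    and q: "0 \<le> q" "q < 1"
    and s: "\<And>t. t \<in> {-pi/2..pi/2} \<Longrightarrow> (\<lambda>n. \<phi> n t) sums \<Phi> t"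
  shows "(\<lambda>n. \<integral>t. w t * \<phi> n t \<partial>lborel) sums (\<integral>t. w t * \<Phi> t \<partial>lborel)"
proof -
  define I where "I = {-pi/2..pi/2::real}"
  have W0: "0 \<le> W" using wb[of 0] by simp
  have bnd: "\<bar>w t * \<phi> n t\<bar> \<le> W * M * q ^ n" for n t
  proof (cases "t \<in> I")
    case True
    then show ?thesis unfolding abs_mult mult.assoc using wb \<phi>b W0 I_def by (intro mult_mono) auto
  next
    case False
    have "0 \<le> \<bar>\<phi> n 0\<bar>" by simp
    also have "\<dots> \<le> M * q ^ n" using \<phi>b[of 0 n] by auto
    finally have "0 \<le> W * M * q ^ n" using W0 by (simp add: mult.assoc)
    then show ?thesis using False w0 I_def by simp
  qed
  have int: "integrable lborel (\<lambda>t. w t * \<phi> n t)" for n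
    by (rule integrableI_bounded_set[where A=I and B="W * M * q ^ n"])
       (use bnd w0 in \<open>auto simp: I_def\<close>)
  have summ: "summable (\<lambda>n. W * M * q ^ n)"
    using q by (intro summable_mult summable_geometric) auto
  have AEs: "AE t in lborel. summable (\<lambda>n. norm (w t * \<phi> n t))"
    by (intro AE_I2 summable_comparison_test'[OF summ]) (use bnd in auto)
  have intb: "(\<integral>t. norm (w t * \<phi> n t) \<partial>lborel) \<le> W * M * q ^ n * pi" for n
  proof -
    have "(\<integral>t. norm (w t * \<phi> n t) \<partial>lborel) \<le> (\<integral>t. W * M * q ^ n * indicator I t \<partial>lborel)"
    proof (rule integral_mono)
      show "integrable lborel (\<lambda>t. norm (w t * \<phi> n t))" using int by simp
      show "integrable lborel (\<lambda>t. W * M * q ^ n * indicator I t)"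
        by (intro integrable_mult_right integrable_real_indicator) (auto simp: I_def)
      fix t show "norm (w t * \<phi> n t) \<le> W * M * q ^ n * indicator I t"
        using bnd[of t n] w0[of t] by (cases "t \<in> I") (auto simp: I_def)
    qed
    also have "\<dots> = W * M * q ^ n * pi" by (simp add: I_def)
    finally show ?thesis .
  qed
  have summ2: "summable (\<lambda>n. \<integral>t. norm (w t * \<phi> n t) \<partial>lborel)"
  proof (rule summable_comparison_test'[where g="\<lambda>n. W * M * q ^ n * pi"])
    show "summable (\<lambda>n. W * M * q ^ n * pi)" using summ by (rule summable_mult2)
    fix n
    have "0 \<le> (\<integral>t. norm (w t * \<phi> n t) \<partial>lborel)" by simp
    then show "norm (\<integral>t. norm (w t * \<phi> n t) \<partial>lborel) \<le> W * M * q ^ n * pi" using intb[of n] by simp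
  qed
  have "(\<lambda>n. \<integral>t. w t * \<phi> n t \<partial>lborel) sums (\<integral>t. (\<Sum>n. w t * \<phi> n t) \<partial>lborel)"
    by (rule sums_integral[OF int AEs summ2])
  moreover have "(\<integral>t. (\<Sum>n. w t * \<phi> n t) \<partial>lborel) = (\<integral>t. w t * \<Phi> t \<partial>lborel)"
  proof (rule Bochner_Integration.integral_cong[OF refl])
    fix t :: real
    show "(\<Sum>n. w t * \<phi> n t) = w t * \<Phi> t"
    proof (cases "t \<in> I")
      case True
      then have "(\<lambda>n. w t * \<phi> n t) sums (w t * \<Phi> t)" using s[of t] I_def by (intro sums_mult) auto
      then show ?thesis by (simp add: sums_iff)
    next
      case False
      then show ?thesis using w0[of t] I_def by simp
    qed
  qed
  ultimately show ?thesis by simp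
qed



lemma Wf_even: "Wf a (-t) = Wf a t"
  by (simp add: Wf_def pw_def)

lemma odd_integral_zero:
  fixes f :: "real \<Rightarrow> real"
  assumes "\<And>t. f (-t) = - f t"
  shows "integral {-pi/2..pi/2} f = 0"
proof -
  have "integral {-(pi/2)..pi/2} (\<lambda>x. f (-x)) = integral {-(pi/2)..pi/2} f"
    using Henstock_Kurzweil_Integration.integral_reflect_real[of "pi/2" "-(pi/2)" f] by simp
  then have "integral {-(pi/2)..pi/2} (\<lambda>x. - f x) = integral {-(pi/2)..pi/2} f"
    using assms by simp
  then have "- integral {-(pi/2)..pi/2} f = integral {-(pi/2)..pi/2} f"
    by (simp add: integral_neg)
  then show ?thesis by simp
qed

lemma den_pos:
  fixes z t :: real
  assumes "z > 2"
  shows "z\<^sup>2 - 4 * (sin t)\<^sup>2 \<ge> z\<^sup>2 - 4" "z\<^sup>2 - 4 > 0"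
proof -
  have "(sin t)\<^sup>2 \<le> 1" using sin_cos_squared_add[of t] zero_le_power2[of "cos t"] by linarith
  then show "z\<^sup>2 - 4 * (sin t)\<^sup>2 \<ge> z\<^sup>2 - 4" by simp
  have "2 * 2 < z * z" by (rule mult_strict_mono) (use assms in auto)
  then show "z\<^sup>2 - 4 > 0" by (simp add: power2_eq_square)
qed

lemma cauchy_theta:
  assumes a: "0 \<le> a" "a < 1" and z: "z > 2"
  shows "(\<integral>t. Wf a t * indicator {-pi/2..pi/2} t * (1 / (z - 2 * sin t)) \<partial>lborel)
       = K a a * (G z * (1 - (G z)\<^sup>2) powr (a - 1))"
proof -
  define I where "I = {-pi/2..pi/2::real}"
  define gg where "gg = G z"
  define q where "q = gg\<^sup>2"
  define C where "C = z * q / (1 - q\<^sup>2)"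
  define h1 where "h1 t = z / (z\<^sup>2 - 4 * (sin t)\<^sup>2)" for t
  define h2 where "h2 t = 2 * sin t / (z\<^sup>2 - 4 * (sin t)\<^sup>2)" for t
  note dp = den_pos[OF z]
  have g: "0 < gg" "gg < 1" "gg + 1 / gg = z" using G_facts[OF z] unfolding gg_def by auto
  have q: "0 < q" "q < 1" unfolding q_def using g by (auto simp: power_less_one_iff)
  have split: "1 / (z - 2 * sin t) = h1 t + h2 t" for t
  proof -
    have "z - 2 * sin t > 0" using z sin_le_one[of t] by linarith
    moreover have "z + 2 * sin t > 0" using z sin_ge_minus_one[of t] by linarith
    moreover have "z\<^sup>2 - 4 * (sin t)\<^sup>2 = (z - 2 * sin t) * (z + 2 * sin t)" by (simp add: power2_eq_square algebra_simps)
    ultimately have "h1 t + h2 t = (z + 2 * sin t) / ((z - 2 * sin t) * (z + 2 * sin t))"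
      unfolding h1_def h2_def by (simp add: add_divide_distrib)
    then show ?thesis using \<open>z + 2 * sin t > 0\<close> by simp
  qed
  have b1: "\<bar>h1 t\<bar> \<le> z / (z\<^sup>2 - 4)" for t
    unfolding h1_def using dp(1)[of t] dp(2) z by (simp add: frac_le abs_divide)
  have b2: "\<bar>h2 t\<bar> \<le> 2 / (z\<^sup>2 - 4)" for t
  proof -
    have "\<bar>h2 t\<bar> = \<bar>2 * sin t\<bar> / (z\<^sup>2 - 4 * (sin t)\<^sup>2)" unfolding h2_def using dp(1)[of t] dp(2) by (simp add: abs_divide)
    also have "\<dots> \<le> 2 / (z\<^sup>2 - 4)"
      by (rule frac_le) (use dp(1)[of t] dp(2) abs_sin_le_one[of t] in \<open>auto simp: abs_mult\<close>)
    finally show ?thesis .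
  qed
  have m1[measurable]: "h1 \<in> borel_measurable borel" unfolding h1_def by measurable
  have m2[measurable]: "h2 \<in> borel_measurable borel" unfolding h2_def by measurable
  note ic1 = int_conv[OF m1 b1 a] and ic2 = int_conv[OF m2 b2 a]
  have "(\<integral>t. Wf a t * indicator I t * (1 / (z - 2 * sin t)) \<partial>lborel)
      = (\<integral>t. Wf a t * indicator I t * h1 t + Wf a t * indicator I t * h2 t \<partial>lborel)"
    by (simp add: split distrib_left)
  also have "\<dots> = (\<integral>t. Wf a t * indicator I t * h1 t \<partial>lborel) + (\<integral>t. Wf a t * indicator I t * h2 t \<partial>lborel)"
    using ic1(1) ic2(1) unfolding I_def by (rule Bochner_Integration.integral_add)
  also have "(\<integral>t. Wf a t * indicator I t * h2 t \<partial>lborel) = 0"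
  proof -
    have "(\<integral>t. Wf a t * indicator I t * h2 t \<partial>lborel) = integral {-pi/2..pi/2} (\<lambda>t. Wf a t * h2 t)"
      using ic2(2) unfolding I_def .
    also have "\<dots> = 0" by (rule odd_integral_zero) (simp add: Wf_even h2_def)
    finally show ?thesis .
  qed
  also have "(\<integral>t. Wf a t * indicator I t * h1 t \<partial>lborel) = C * K a a * (1 - q) powr a"
  proof -
    define \<phi> where "\<phi> n t = C * ((if n = 0 then 1 else 2) * (-q) ^ n * cos (2 * real n * t))" for n t
    have "(\<lambda>n. \<integral>t. (Wf a t * indicator I t) * \<phi> n t \<partial>lborel) sums (\<integral>t. (Wf a t * indicator I t) * h1 t \<partial>lborel)"
    proof (rule sums_int_gen[where W=2 and M="2 * \<bar>C\<bar>" and q=q])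
      show "\<bar>Wf a t * indicator I t\<bar> \<le> 2" for t
        using Wf_bound[OF a, of t] by (auto simp: I_def indicator_def)
      show "t \<notin> {-pi/2..pi/2} \<Longrightarrow> Wf a t * indicator I t = 0" for t by (simp add: I_def)
      show "\<phi> n \<in> borel_measurable borel" for n unfolding \<phi>_def by measurable
      show "\<bar>\<phi> n t\<bar> \<le> 2 * \<bar>C\<bar> * q ^ n" for n t
      proof -
        have "\<bar>\<phi> n t\<bar> = \<bar>C\<bar> * ((if n = 0 then 1 else 2) * q ^ n * \<bar>cos (2 * real n * t)\<bar>)"
          unfolding \<phi>_def using q by (simp add: abs_mult power_abs)
        also have "\<dots> \<le> \<bar>C\<bar> * (2 * q ^ n * 1)"
          using q by (intro mult_left_mono mult_mono) auto
        finally show ?thesis by simp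
      qed
      show "t \<in> {-pi/2..pi/2} \<Longrightarrow> (\<lambda>n. \<phi> n t) sums h1 t" for t
      proof -
        have "(\<lambda>n. \<phi> n t) sums (C * ((1 - q\<^sup>2) / (1 + 2 * q * cos (2 * t) + q\<^sup>2)))"
          unfolding \<phi>_def by (intro sums_mult cauchy_series q)
        moreover have "C * ((1 - q\<^sup>2) / (1 + 2 * q * cos (2 * t) + q\<^sup>2)) = h1 t"
        proof -
          have zz: "z = gg + 1 / gg" using g by simp
          have D: "1 + 2 * q * cos (2 * t) + q\<^sup>2 = q * (z\<^sup>2 - 4 * (sin t)\<^sup>2)"
            unfolding q_def zz cos_double_sin using g(1) by (simp add: field_simps power2_eq_square)
          have "1 - q\<^sup>2 > 0" using q by (simp add: power_less_one_iff)
          moreover have "z\<^sup>2 - 4 * (sin t)\<^sup>2 \<noteq> 0" using dp(1)[of t] dp(2) by linarith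
          moreover have gen: "\<And>X Y. X \<noteq> 0 \<Longrightarrow> Y \<noteq> 0 \<Longrightarrow> z * q / Y * (Y / (q * X)) = z / X"
            using q by (simp add: field_simps)
          ultimately show ?thesis unfolding C_def h1_def D by (intro gen) auto
        qed
        ultimately show ?thesis by simp
      qed
    qed (use q in \<open>auto simp: I_def\<close>)
    moreover have "(\<integral>t. (Wf a t * indicator I t) * \<phi> n t \<partial>lborel) = C * K a a * ((a gchoose n) * (-q) ^ n)" for n
    proof -
      have "(\<integral>t. (Wf a t * indicator I t) * \<phi> n t \<partial>lborel)
          = C * ((if n = 0 then 1 else 2) * (-q) ^ n) * (\<integral>t. Wf a t * indicator I t * cos (2 * real n * t) \<partial>lborel)"
      proof -
        have "(\<integral>t. (Wf a t * indicator I t) * \<phi> n t \<partial>lborel)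
           = (\<integral>t. C * ((if n = 0 then 1 else 2) * (-q) ^ n) * (Wf a t * indicator I t * cos (2 * real n * t)) \<partial>lborel)"
          unfolding \<phi>_def by (rule Bochner_Integration.integral_cong) (simp_all add: mult_ac)
        then show ?thesis by (simp only: integral_mult_right_zero)
      qed
      also have "(\<integral>t. Wf a t * indicator I t * cos (2 * real n * t) \<partial>lborel) = integral I (\<lambda>t. Wf a t * cos (2 * real n * t))"
        unfolding I_def by (rule int_conv[where B=1]) (use a in auto)
      also have "\<dots> = (if n = 0 then K a a else (a gchoose n) / 2 * K a a)"
        unfolding I_def by (rule Wf_fourier[OF a(1)])
      finally show ?thesis by auto
    qed
    ultimately have s1: "(\<lambda>n. C * K a a * ((a gchoose n) * (-q) ^ n)) sums (\<integral>t. Wf a t * indicator I t * h1 t \<partial>lborel)"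
      by simp
    have "(\<lambda>n. (a gchoose n) * (-q) ^ n) sums (1 + -q) powr a"
      by (rule gen_binomial_real) (use q in auto)
    then have "(\<lambda>n. C * K a a * ((a gchoose n) * (-q) ^ n)) sums (C * K a a * (1 - q) powr a)"
      by (intro sums_mult) simp
    with s1 show ?thesis using sums_unique2 by blast
  qed
  also have "C * K a a * (1 - q) powr a = K a a * (G z * (1 - (G z)\<^sup>2) powr (a - 1))"
  proof -
    have q1: "0 < 1 - q" using q by simp
    have "(1 - q) powr a = (1 - q) * (1 - q) powr (a - 1)"
      using q1 by (simp add: powr_diff powr_add[symmetric] field_simps)
    moreover have "C * (1 - q) = gg"
    proof -
      have zz: "z = gg + 1 / gg" using g by simp
      have zq: "z * q = gg * (1 + q)" unfolding zz q_def using g(1) by (simp add: field_simps power2_eq_square)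
      have f: "1 - q\<^sup>2 = (1 - q) * (1 + q)" by (simp add: power2_eq_square algebra_simps)
      have "1 + q > 0" using q by simp
      moreover have gen: "\<And>A B. A \<noteq> 0 \<Longrightarrow> B \<noteq> 0 \<Longrightarrow> gg * B / (A * B) * A = gg" by simp
      ultimately show ?thesis unfolding C_def f zq using q1 by (intro gen) auto
    qed
    ultimately show ?thesis unfolding q_def gg_def by (simp add: mult_ac)
  qed
  finally show ?thesis unfolding I_def by simp
qed



lemma int_conv0:
  fixes f :: "real \<Rightarrow> real"
  assumes [measurable]: "f \<in> borel_measurable borel" and B: "\<And>t. t \<in> {-pi/2..pi/2} \<Longrightarrow> \<bar>f t\<bar> \<le> B"
  shows "integrable lborel (\<lambda>t. indicator {-pi/2<..<pi/2} t * f t)"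
    and "(\<integral>t. indicator {-pi/2<..<pi/2} t * f t \<partial>lborel) = integral {-pi/2..pi/2} f"
proof -
  have B0: "0 \<le> B" using B[of 0] by auto
  show int: "integrable lborel (\<lambda>t. indicator {-pi/2<..<pi/2} t * f t)"
  proof (rule integrableI_bounded_set[where A="{-pi/2..pi/2}" and B="B"])
    show "AE x in lborel. x \<in> {-pi/2..pi/2} \<longrightarrow> norm (indicator {-pi/2<..<pi/2} x * f x) \<le> B"
      using B B0 by (intro AE_I2 impI) (auto simp: indicator_def)
  qed (auto simp: indicator_def)
  define L where "L = (\<integral>t. indicator {-pi/2<..<pi/2} t * f t \<partial>lborel)"
  have h: "((\<lambda>t. indicator {-pi/2<..<pi/2} t * f t) has_integral L) UNIV"
    unfolding L_def by (rule has_integral_integral_lborel[OF int])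
  have "((\<lambda>t. if t \<in> {-pi/2..pi/2} then f t else 0) has_integral L) UNIV"
    by (rule has_integral_spike_finite[OF _ _ h, where S="{-pi/2, pi/2}"]) (auto simp: indicator_def)
  then have "(f has_integral L) {-pi/2..pi/2}"
    by (simp only: has_integral_restrict_UNIV)
  then show "(\<integral>t. indicator {-pi/2<..<pi/2} t * f t \<partial>lborel) = integral {-pi/2..pi/2} f"
    unfolding L_def[symmetric] by (simp add: integral_unique)
qed

lemma cos_int_zero:
  assumes "n > 0"
  shows "integral {-pi/2..pi/2} (\<lambda>t. cos (2 * real n * t)) = 0"
proof -
  have "((\<lambda>t. cos (2 * real n * t)) has_integral (sin (2 * real n * (pi/2)) / (2 * real n) - sin (2 * real n * (-pi/2)) / (2 * real n))) {-pi/2..pi/2}"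
    by (rule fundamental_theorem_of_calculus)
       (use assms in \<open>auto intro!: derivative_eq_intros simp: has_real_derivative_iff_has_vector_derivative[symmetric]\<close>)
  moreover have "sin (2 * real n * (pi/2)) = 0" "sin (2 * real n * (-pi/2)) = 0"
    by (simp_all add: mult.commute)
  ultimately show ?thesis by (simp add: integral_unique)
qed

lemma log_series:
  assumes q: "0 < q" "q < 1"
  shows "(\<lambda>n. - ((-q) ^ n * cos (2 * real n * t)) / real n) sums (ln (1 + 2 * q * cos (2 * t) + q\<^sup>2) / 2)"
proof -
  define w where "w = complex_of_real q * cis (2 * t)"
  have nw: "norm w < 1" using q by (simp add: w_def norm_mult)
  have "(\<lambda>n. - ((-w)^n) / of_nat n) sums ln (1 + w)" by (rule Ln_series'[OF nw])
  then have S: "(\<lambda>n. Re (- ((-w)^n) / of_nat n)) sums Re (ln (1 + w))" by (simp add: sums_complex_iff)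
  have E: "Re (- ((-w)^n) / of_nat n) = - ((-q) ^ n * cos (2 * real n * t)) / real n" for n
  proof -
    have "Re (cis (2 * t) ^ n) = cos (real n * (2 * t))" by (simp add: cis_power_int flip: power_int_of_nat)
    moreover have "(-w)^n = complex_of_real ((-q)^n) * cis (2 * t) ^ n"
      by (simp add: w_def power_mult_distrib power_minus')
    ultimately show ?thesis by (simp add: mult_ac)
  qed
  have RE: "Re (ln (1 + w)) = ln (1 + 2 * q * cos (2 * t) + q\<^sup>2) / 2"
  proof -
    have w1: "1 + w \<noteq> 0" using nw by (metis add.inverse_unique norm_minus_cancel norm_one less_irrefl)
    have "(norm (1 + w))\<^sup>2 = 1 + 2 * q * cos (2 * t) + q\<^sup>2"
    proof -
      have h: "cos (2*t) * cos (2*t) + sin (2*t) * sin (2*t) = 1" using sin_cos_squared_add[of "2*t"] by (simp add: power2_eq_square)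
      have "(norm (1 + w))\<^sup>2 = (1 + q * cos (2*t))\<^sup>2 + (q * sin (2*t))\<^sup>2"
        by (simp add: w_def cmod_power2)
      also have "\<dots> = 1 + 2 * q * cos (2 * t) + q\<^sup>2" unfolding power2_eq_square using h by algebra
      finally show ?thesis .
    qed
    moreover have "ln ((norm (1 + w))\<^sup>2) = 2 * ln (norm (1 + w))"
      using w1 by (simp add: ln_realpow)
    ultimately show ?thesis using w1 by simp
  qed
  have EE: "(\<lambda>n. Re (- ((-w)^n) / of_nat n)) = (\<lambda>n. - ((-q) ^ n * cos (2 * real n * t)) / real n)"
    using E by (intro ext) simp
  show ?thesis using S unfolding EE RE .
qed

lemma log_theta:
  assumes z: "z > 2"
  shows "integral {-pi/2..pi/2} (\<lambda>t. ln (z - 2 * sin t)) = - pi * ln (G z)"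
proof -
  define I where "I = {-pi/2..pi/2::real}"
  define gg where "gg = G z"
  define q where "q = gg\<^sup>2"
  have g: "0 < gg" "gg < 1" "gg + 1 / gg = z" using G_facts[OF z] unfolding gg_def by auto
  have q: "0 < q" "q < 1" unfolding q_def using g by (auto simp: power_less_one_iff)
  have pos: "z - 2 * sin t > 0" "z + 2 * sin t > 0" for t
    using z sin_le_one[of t] sin_ge_minus_one[of t] by linarith+
  have lnb: "\<bar>ln (z + c * sin t)\<bar> \<le> \<bar>ln (z - 2)\<bar> + \<bar>ln (z + 2)\<bar>" if c: "\<bar>c\<bar> = 2" for c t
  proof -
    have "\<bar>c * sin t\<bar> \<le> 2" using c abs_sin_le_one[of t] by (simp add: abs_mult)
    then have r: "z - 2 \<le> z + c * sin t" "z + c * sin t \<le> z + 2" by auto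
    have "ln (z - 2) \<le> ln (z + c * sin t)" using r z by simp
    moreover have "ln (z + c * sin t) \<le> ln (z + 2)" using r z by simp
    ultimately show ?thesis by linarith
  qed
  have b1: "\<bar>ln (z - 2 * sin t)\<bar> \<le> \<bar>ln (z - 2)\<bar> + \<bar>ln (z + 2)\<bar>" for t using lnb[of "-2" t] by simp
  have b2: "\<bar>ln (z + 2 * sin t)\<bar> \<le> \<bar>ln (z - 2)\<bar> + \<bar>ln (z + 2)\<bar>" for t using lnb[of "2" t] by simp
  have reflx: "integral I (\<lambda>t. ln (z - 2 * sin t)) = integral I (\<lambda>t. ln (z + 2 * sin t))"
    using Henstock_Kurzweil_Integration.integral_reflect_real[of "pi/2" "-(pi/2)" "\<lambda>t. ln (z - 2 * sin t)"]
    by (simp add: I_def)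
  define D where "D t = 1 + 2 * q * cos (2 * t) + q\<^sup>2" for t
  have Dq: "(z - 2 * sin t) * (z + 2 * sin t) = D t / q" for t
  proof -
    have zz: "z = gg + 1 / gg" using g by simp
    have "(z - 2 * sin t) * (z + 2 * sin t) = z\<^sup>2 - 4 * (sin t)\<^sup>2" by (simp add: power2_eq_square algebra_simps)
    also have "\<dots> = D t / q"
      unfolding D_def q_def zz cos_double_sin using g(1) by (simp add: field_simps power2_eq_square)
    finally show ?thesis .
  qed
  have Dpos: "D t > 0" for t using Dq[of t] pos[of t] q by (smt (verit) divide_nonpos_pos mult_pos_pos)
  have lnsum: "ln (z - 2 * sin t) + ln (z + 2 * sin t) = ln (D t) - ln q" for t
  proof -
    have "ln (z - 2 * sin t) + ln (z + 2 * sin t) = ln ((z - 2 * sin t) * (z + 2 * sin t))"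
      using pos[of t] by (simp add: ln_mult)
    also have "\<dots> = ln (D t / q)" using Dq[of t] by simp
    also have "\<dots> = ln (D t) - ln q" using Dpos[of t] q by (simp add: ln_div)
    finally show ?thesis .
  qed
  have mD[measurable]: "D \<in> borel_measurable borel" unfolding D_def by measurable
  have bD: "\<bar>ln (D t) / 2\<bar> \<le> \<bar>ln (z - 2)\<bar> + \<bar>ln (z + 2)\<bar> + \<bar>ln q\<bar>" for t
    using lnsum[of t] b1[of t] b2[of t] by linarith
  have intD: "(\<integral>t. indicator {-pi/2<..<pi/2} t * (ln (D t) / 2) \<partial>lborel) = 0"
  proof -
    define \<phi> where "\<phi> n t = - ((-q) ^ n * cos (2 * real n * t)) / real n" for n t
    have "(\<lambda>n. \<integral>t. indicator {-pi/2<..<pi/2} t * \<phi> n t \<partial>lborel) sums (\<integral>t. indicator {-pi/2<..<pi/2} t * (ln (D t) / 2) \<partial>lborel)"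
    proof (rule sums_int_gen[where W=1 and M=1 and q=q])
      show "\<bar>\<phi> n t\<bar> \<le> 1 * q ^ n" for n t
      proof (cases n)
        case 0 then show ?thesis by (simp add: \<phi>_def)
      next
        case (Suc m)
        have "\<bar>\<phi> n t\<bar> = q ^ n * \<bar>cos (2 * real n * t)\<bar> / real n"
          unfolding \<phi>_def using q by (simp add: abs_mult power_abs abs_divide)
        also have "\<dots> \<le> q ^ n * 1 / 1"
          using q Suc by (intro frac_le mult_left_mono) auto
        finally show ?thesis by simp
      qed
      show "t \<in> {-pi/2..pi/2} \<Longrightarrow> (\<lambda>n. \<phi> n t) sums (ln (D t) / 2)" for t
        unfolding \<phi>_def D_def by (rule log_series[OF q])
    qed (use q in \<open>auto simp: \<phi>_def indicator_def\<close>)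
    moreover have "(\<integral>t. indicator {-pi/2<..<pi/2} t * \<phi> n t \<partial>lborel) = 0" for n
    proof (cases n)
      case 0 then show ?thesis by (simp add: \<phi>_def)
    next
      case (Suc m)
      have "(\<integral>t. indicator {-pi/2<..<pi/2} t * \<phi> n t \<partial>lborel)
          = (\<integral>t. (- ((-q) ^ n) / real n) * (indicator {-pi/2<..<pi/2} t * cos (2 * real n * t)) \<partial>lborel)"
        unfolding \<phi>_def by (rule Bochner_Integration.integral_cong) (simp_all add: field_simps)
      also have "\<dots> = (- ((-q) ^ n) / real n) * (\<integral>t. indicator {-pi/2<..<pi/2} t * cos (2 * real n * t) \<partial>lborel)"
        by (rule integral_mult_right_zero)
      also have "(\<integral>t. indicator {-pi/2<..<pi/2} t * cos (2 * real n * t) \<partial>lborel) = integral {-pi/2..pi/2} (\<lambda>t. cos (2 * real n * t))"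
        by (rule int_conv0[where B=1]) auto
      also have "\<dots> = 0" using Suc by (intro cos_int_zero) auto
      finally show ?thesis by simp
    qed
    ultimately show ?thesis by (simp add: sums_iff)
  qed
  have "integral I (\<lambda>t. ln (z - 2 * sin t)) + integral I (\<lambda>t. ln (z + 2 * sin t))
      = (\<integral>t. indicator {-pi/2<..<pi/2} t * ln (z - 2 * sin t) \<partial>lborel) + (\<integral>t. indicator {-pi/2<..<pi/2} t * ln (z + 2 * sin t) \<partial>lborel)"
    unfolding I_def using int_conv0(2)[OF _ b1] int_conv0(2)[OF _ b2] by simp
  also have "\<dots> = (\<integral>t. indicator {-pi/2<..<pi/2} t * ln (z - 2 * sin t) + indicator {-pi/2<..<pi/2} t * ln (z + 2 * sin t) \<partial>lborel)"
    by (rule Bochner_Integration.integral_add[symmetric]) (intro int_conv0(1)[OF _ b1] int_conv0(1)[OF _ b2]; simp)+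
  also have "\<dots> = (\<integral>t. 2 * (indicator {-pi/2<..<pi/2} t * (ln (D t) / 2)) - ln q * indicator {-pi/2<..<pi/2} t \<partial>lborel)"
  proof (rule Bochner_Integration.integral_cong[OF refl])
    fix t :: real
    have "indicator {-pi/2<..<pi/2} t * ln (z - 2 * sin t) + indicator {-pi/2<..<pi/2} t * ln (z + 2 * sin t)
        = indicator {-pi/2<..<pi/2} t * (ln (D t) - ln q)"
      unfolding distrib_left[symmetric] lnsum ..
    then show "indicator {-pi/2<..<pi/2} t * ln (z - 2 * sin t) + indicator {-pi/2<..<pi/2} t * ln (z + 2 * sin t)
        = 2 * (indicator {-pi/2<..<pi/2} t * (ln (D t) / 2)) - ln q * indicator {-pi/2<..<pi/2} t"
      by (simp add: algebra_simps)
  qed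
  also have "\<dots> = 2 * (\<integral>t. indicator {-pi/2<..<pi/2} t * (ln (D t) / 2) \<partial>lborel) - ln q * (\<integral>t. indicator {-pi/2<..<pi/2} t \<partial>lborel)"
  proof -
    have i1: "integrable lborel (\<lambda>t. indicator {-pi/2<..<pi/2} t * (ln (D t) / 2))"
      by (rule int_conv0(1)[OF _ bD]) simp
    have i2: "integrable lborel (\<lambda>t. indicator {-pi/2<..<pi/2} t :: real)"
      by (rule integrable_real_indicator) auto
    have "(\<integral>t. 2 * (indicator {-pi/2<..<pi/2} t * (ln (D t) / 2)) - ln q * indicator {-pi/2<..<pi/2} t \<partial>lborel)
      = (\<integral>t. 2 * (indicator {-pi/2<..<pi/2} t * (ln (D t) / 2)) \<partial>lborel) - (\<integral>t. ln q * indicator {-pi/2<..<pi/2} t \<partial>lborel)"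
      by (rule Bochner_Integration.integral_diff) (intro integrable_mult_right i1 i2)+
    then show ?thesis by (simp only: integral_mult_right_zero)
  qed
  also have "\<dots> = - pi * ln q" using intD by simp
  finally have "2 * integral I (\<lambda>t. ln (z - 2 * sin t)) = - pi * ln q" using reflx by simp
  moreover have "ln q = 2 * ln gg" unfolding q_def using g by (simp add: ln_realpow)
  ultimately show ?thesis unfolding I_def gg_def by simp
qed



definition phiT :: "real \<Rightarrow> real" where
  "phiT t = (if t \<in> {-pi/2<..<pi/2} then 2 * sin t else if t < 3 then -2 else 2)"

definition hT :: "real \<Rightarrow> real \<Rightarrow> real" where
  "hT lam t = (1 - 1/lam) / pi * indicator {-pi/2<..<pi/2} t + 1/(2*lam) * indicator {2..<3} t + 1/(2*lam) * indicator {3..<4} t"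

lemma phiT_meas[measurable]: "phiT \<in> borel_measurable borel"
  unfolding phiT_def by measurable

lemma hT_meas[measurable]: "hT lam \<in> borel_measurable borel"
  unfolding hT_def by measurable

lemma pi_half_lt2: "pi/2 < 2" using pi_less_4 by simp

lemma arcsine_sub: "t \<in> {-pi/2<..<pi/2} \<Longrightarrow> arcsine_dens (2 * sin t) * (2 * cos t) = 1 / pi"
proof -
  assume t: "t \<in> {-pi/2<..<pi/2}"
  have c: "cos t > 0" using cos_pos_half[OF t] .
  have h: "cos t * cos t + sin t * sin t = 1" using sin_cos_squared_add[of t] by (simp add: power2_eq_square)
  have "4 - (2 * sin t)\<^sup>2 = (2 * cos t)\<^sup>2" unfolding power2_eq_square using h by algebra
  then have s: "sqrt (4 - (2 * sin t)\<^sup>2) = 2 * cos t" using c by (simp only: real_sqrt_abs)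
  have "2 * sin t \<in> {-2..2}" using sin_le_one[of t] sin_ge_minus_one[of t] by auto
  then show ?thesis unfolding arcsine_dens_def s using c by simp
qed

lemma arcsine_meas[measurable]: "arcsine_dens \<in> borel_measurable borel"
  unfolding arcsine_dens_def by measurable

lemma arcsine_nonneg: "arcsine_dens x \<ge> 0"
proof (cases "x \<in> {-2..2}")
  case True
  then have "0 \<le> (2 - x) * (2 + x)" by (intro mult_nonneg_nonneg) auto
  then have "0 \<le> 4 - x\<^sup>2" by (simp add: power2_eq_square algebra_simps)
  then show ?thesis unfolding arcsine_dens_def using True by simp
next
  case False
  then show ?thesis unfolding arcsine_dens_def by simp
qed

lemma arcsine_zero: "x \<notin> {-2<..<2} \<Longrightarrow> arcsine_dens x = 0"
  unfolding arcsine_dens_def by (auto simp: indicator_def)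

lemma tau_repr:
  assumes lam: "lam \<ge> 1"
  shows "tau lam = distr (density lborel (\<lambda>t. ennreal (hT lam t))) borel phiT"
proof -
  define R where "R = distr (density lborel (\<lambda>t. ennreal (hT lam t))) borel phiT"
  have R: "R = measure_of UNIV (sets borel) (emeasure R)"
    using measure_of_of_measure[of R] by (simp add: R_def)
  have c1: "0 \<le> 1 - 1/lam" using lam by (simp add: field_simps)
  have c2: "0 \<le> 1/(2*lam)" using lam by simp
  have eq: "ennreal (1 - 1 / lam) * (\<integral>\<^sup>+ x. ennreal (arcsine_dens x) * indicator A x \<partial>lborel)
          + ennreal (1 / lam) * ((indicator A (-2) + indicator A 2) / 2) = emeasure R A"
    if A: "A \<in> sets borel" for A
  proof -
    have Am[measurable]: "A \<in> sets borel" by (rule A)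
    have pre: "phiT -` A \<in> sets lborel"
      using measurable_sets[of phiT lborel borel A] A by auto
    have "emeasure R A = (\<integral>\<^sup>+t. ennreal (hT lam t) * indicator (phiT -` A) t \<partial>lborel)"
    proof -
      have "emeasure (density lborel (\<lambda>t. ennreal (hT lam t))) (phiT -` A) = (\<integral>\<^sup>+t. ennreal (hT lam t) * indicator (phiT -` A) t \<partial>lborel)"
        by (rule emeasure_density) (use pre in auto)
      then show ?thesis by (simp add: R_def emeasure_distr)
    qed
    also have "\<dots> = (\<integral>\<^sup>+t. ennreal ((1 - 1/lam) / pi * indicator {-pi/2<..<pi/2} t) * indicator A (2 * sin t)
                  + (ennreal (1/(2*lam)) * indicator A (-2) * indicator {2..<3} t
                  + ennreal (1/(2*lam)) * indicator A 2 * indicator {3..<4} t) \<partial>lborel)"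
    proof (rule nn_integral_cong)
      fix t :: real
      consider "t \<in> {-pi/2<..<pi/2}" | "t \<in> {2..<3}" | "t \<in> {3..<4}" | "t \<notin> {-pi/2<..<pi/2}" "t \<notin> {2..<3}" "t \<notin> {3..<4}"
        by blast
      then show "ennreal (hT lam t) * indicator (phiT -` A) t = ennreal ((1 - 1/lam) / pi * indicator {-pi/2<..<pi/2} t) * indicator A (2 * sin t)
                  + (ennreal (1/(2*lam)) * indicator A (-2) * indicator {2..<3} t
                  + ennreal (1/(2*lam)) * indicator A 2 * indicator {3..<4} t)"
      proof cases
        case 1
        then have "t \<notin> {2..<3}" "t \<notin> {3..<4}" using pi_half_lt2 by auto
        moreover have "phiT t = 2 * sin t" unfolding phiT_def using 1 by auto
        ultimately show ?thesis using 1 c1 by (simp add: hT_def indicator_vimage)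
      next
        case 2
        then have "t \<notin> {-pi/2<..<pi/2}" "t \<notin> {3..<4}" using pi_half_lt2 by auto
        moreover have "phiT t = -2" unfolding phiT_def using 2 \<open>t \<notin> {-pi/2<..<pi/2}\<close> by auto
        ultimately show ?thesis using 2 c2 by (simp add: hT_def indicator_vimage)
      next
        case 3
        then have "t \<notin> {-pi/2<..<pi/2}" "t \<notin> {2..<3}" using pi_half_lt2 by auto
        moreover have "phiT t = 2" unfolding phiT_def using 3 \<open>t \<notin> {-pi/2<..<pi/2}\<close> by auto
        ultimately show ?thesis using 3 c2 by (simp add: hT_def indicator_vimage)
      qed (simp add: hT_def)
    qed
    also have "\<dots> = (\<integral>\<^sup>+t. ennreal ((1 - 1/lam) / pi * indicator {-pi/2<..<pi/2} t) * indicator A (2 * sin t) \<partial>lborel)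
        + ((\<integral>\<^sup>+t. ennreal (1/(2*lam)) * indicator A (-2) * indicator {(2::real)..<3} t \<partial>lborel)
        + (\<integral>\<^sup>+t. ennreal (1/(2*lam)) * indicator A 2 * indicator {(3::real)..<4} t \<partial>lborel))"
      by (simp add: nn_integral_add)
    also have "(\<integral>\<^sup>+t. ennreal (1/(2*lam)) * indicator A (-2) * indicator {(2::real)..<3} t \<partial>lborel) = ennreal (1/(2*lam)) * indicator A (-2)"
      by (subst nn_integral_cmult_indicator) auto
    also have "(\<integral>\<^sup>+t. ennreal (1/(2*lam)) * indicator A 2 * indicator {(3::real)..<4} t \<partial>lborel) = ennreal (1/(2*lam)) * indicator A 2"
      by (subst nn_integral_cmult_indicator) auto
    also have "(\<integral>\<^sup>+t. ennreal ((1 - 1/lam) / pi * indicator {-pi/2<..<pi/2} t) * indicator A (2 * sin t) \<partial>lborel)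
        = ennreal (1 - 1 / lam) * (\<integral>\<^sup>+ x. ennreal (arcsine_dens x) * indicator A x \<partial>lborel)"
    proof -
      have "(\<integral>\<^sup>+ x. ennreal (arcsine_dens x) * indicator A x \<partial>lborel) = emeasure (density lborel (\<lambda>x. ennreal (arcsine_dens x))) A"
        by (simp add: emeasure_density)
      also have "\<dots> = emeasure (distr (density lborel (\<lambda>t. ennreal (arcsine_dens (2 * sin t) * (2 * cos t) * indicator {-pi/2<..<pi/2} t))) lborel (\<lambda>t. 2 * sin t)) A"
        by (subst subst_meas) (auto simp: arcsine_nonneg arcsine_zero)
      also have "\<dots> = (\<integral>\<^sup>+t. ennreal (arcsine_dens (2 * sin t) * (2 * cos t) * indicator {-pi/2<..<pi/2} t) * indicator ((\<lambda>t. 2 * sin t) -` A) t \<partial>lborel)"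
      proof -
        have pre2: "(\<lambda>t. 2 * sin t) -` A \<in> sets lborel"
          using measurable_sets[of "\<lambda>t::real. 2 * sin t" lborel borel A] A by auto
        have "emeasure (density lborel (\<lambda>t. ennreal (arcsine_dens (2 * sin t) * (2 * cos t) * indicator {-pi/2<..<pi/2} t))) ((\<lambda>t. 2 * sin t) -` A)
          = (\<integral>\<^sup>+t. ennreal (arcsine_dens (2 * sin t) * (2 * cos t) * indicator {-pi/2<..<pi/2} t) * indicator ((\<lambda>t. 2 * sin t) -` A) t \<partial>lborel)"
          by (rule emeasure_density) (use pre2 in auto)
        then show ?thesis by (simp add: emeasure_distr)
      qed
      also have "\<dots> = (\<integral>\<^sup>+t. ennreal (1 / pi * indicator {-pi/2<..<pi/2} t) * indicator A (2 * sin t) \<partial>lborel)"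
        by (rule nn_integral_cong) (auto simp: arcsine_sub indicator_def)
      finally have e: "(\<integral>\<^sup>+ x. ennreal (arcsine_dens x) * indicator A x \<partial>lborel) = (\<integral>\<^sup>+t. ennreal (1 / pi * indicator {-pi/2<..<pi/2} t) * indicator A (2 * sin t) \<partial>lborel)" .
      have "ennreal (1 - 1 / lam) * (\<integral>\<^sup>+t. ennreal (1 / pi * indicator {-pi/2<..<pi/2} t) * indicator A (2 * sin t) \<partial>lborel)
          = (\<integral>\<^sup>+t. ennreal (1 - 1 / lam) * (ennreal (1 / pi * indicator {-pi/2<..<pi/2} t) * indicator A (2 * sin t)) \<partial>lborel)"
        by (rule nn_integral_cmult[symmetric]) measurable
      also have "\<dots> = (\<integral>\<^sup>+t. ennreal ((1 - 1/lam) / pi * indicator {-pi/2<..<pi/2} t) * indicator A (2 * sin t) \<partial>lborel)"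
        by (rule nn_integral_cong) (use c1 in \<open>simp add: ennreal_mult[symmetric] mult.assoc[symmetric]\<close>)
      finally show ?thesis using e by simp
    qed
    also have "ennreal (1/(2*lam)) * indicator A (-2) + ennreal (1/(2*lam)) * indicator A 2 = ennreal (1 / lam) * ((indicator A (-2) + indicator A 2) / 2)"
    proof -
      have h: "ennreal (1/(2*lam)) + ennreal (1/(2*lam)) = ennreal (1/lam)"
        using c2 by (simp add: ennreal_plus[symmetric])
      have e2: "ennreal (1/2) = 1/2" using divide_ennreal[of 1 2] by simp
      have r: "1/(2*lam) = 1/lam * (1/2)" by simp
      have h2: "ennreal (1/(2*lam)) = ennreal (1 / lam) * (1 / 2)"
        unfolding r using ennreal_mult[of "1/lam" "1/2"] lam e2 by simp
      have e22: "(2::ennreal) / 2 = 1" using divide_ennreal[of 2 2] by simp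
      have "ennreal (1/(2*lam)) * indicator A (-2) + ennreal (1/(2*lam)) * indicator A 2 = ennreal (1 / lam) * ((indicator A (-2) + indicator A 2) / 2)"
        if "-2 \<in> A" "2 \<in> A" using that by (simp add: h e22 one_add_one)
      moreover have "ennreal (1/(2*lam)) * indicator A (-2) + ennreal (1/(2*lam)) * indicator A 2 = ennreal (1 / lam) * ((indicator A (-2) + indicator A 2) / 2)"
        if "\<not> (-2 \<in> A \<and> 2 \<in> A)" using that by (cases "-2 \<in> A"; cases "2 \<in> A") (simp_all add: h2 ennreal_times_divide)
      ultimately show ?thesis by blast
    qed
    finally show ?thesis by (simp add: add.assoc)
  qed
  show ?thesis unfolding tau_def R_def[symmetric]
    by (subst R) (rule measure_of_eq; use eq sets.sigma_sets_eq[of borel] in auto)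
qed



lemma cos_ge_half:
  assumes "\<bar>x\<bar> \<le> pi/3"
  shows "cos x \<ge> 1/2"
proof -
  have "cos (pi/3) \<le> cos \<bar>x\<bar>" by (rule cos_monotone_0_pi_le) (use assms in auto)
  then show ?thesis by (simp add: cos_60)
qed

lemma K_pos:
  assumes a: "0 \<le> a" "a < 1"
  shows "K a a > 0"
proof -
  have intI: "(\<lambda>t. Wf a t) integrable_on {-pi/2..pi/2}"
    using pw_integrable[OF a(1), of a] unfolding Wf_def .
  have intS: "(\<lambda>t. Wf a t) integrable_on {-pi/3..pi/3}"
    by (rule integrable_on_subinterval[OF intI]) (auto simp: divide_simps)
  have lb: "1/2 \<le> Wf a t" if t: "t \<in> {-pi/3..pi/3}" for t
  proof -
    have tt: "\<bar>t\<bar> \<le> pi/3" using t by auto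
    have c: "cos t \<ge> 1/2" by (rule cos_ge_half[OF tt])
    have "1 \<le> pw a t" unfolding pw_def using c a by (intro ge_one_powr_ge_zero) auto
    moreover have "\<bar>a * t\<bar> \<le> pi/3"
    proof -
      have "\<bar>a * t\<bar> = a * \<bar>t\<bar>" using a by (simp add: abs_mult)
      also have "\<dots> \<le> 1 * \<bar>t\<bar>" by (rule mult_right_mono) (use a in auto)
      finally show ?thesis using tt by simp
    qed
    then have "cos (a * t) \<ge> 1/2" by (rule cos_ge_half)
    ultimately have "1 * (1/2) \<le> pw a t * cos (a * t)" by (intro mult_mono) auto
    then show ?thesis by (simp add: Wf_def)
  qed
  have "integral {-pi/3..pi/3} (\<lambda>t. 1/2 :: real) \<le> integral {-pi/3..pi/3} (\<lambda>t. Wf a t)"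
    by (rule integral_le) (use intS lb in auto)
  also have "\<dots> \<le> integral {-pi/2..pi/2} (\<lambda>t. Wf a t)"
    by (rule integral_subset_le) (use intS intI Wf_nonneg[OF a] in \<open>auto simp: divide_simps\<close>)
  also have "\<dots> = K a a" by (simp add: K_def Wf_def)
  finally have "integral {-pi/3..pi/3} (\<lambda>t. 1/2 :: real) \<le> K a a" .
  moreover have "integral {-pi/3..pi/3} (\<lambda>t. 1/2 :: real) = pi/3" by simp
  ultimately show ?thesis using pi_gt_zero by linarith
qed

lemma nu_meas[measurable]: "nu_dens lam \<in> borel_measurable borel"
proof -
  have "(\<lambda>x. indicator {-2<..<2} x *\<^sub>R (cos ((1 - 1 / lam) * arcsin (x / 2)) * (4 - x\<^sup>2) powr (- 1 / (2 * lam)))) \<in> borel_measurable borel"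
  proof (rule borel_measurable_continuous_on_indicator)
    show "continuous_on {-2<..<2::real} (\<lambda>x. cos ((1 - 1 / lam) * arcsin (x / 2)) * (4 - x\<^sup>2) powr (- 1 / (2 * lam)))"
    proof -
      have nz: "\<forall>x\<in>{-2<..<2::real}. 4 - x\<^sup>2 \<noteq> 0"
      proof
        fix x :: real assume x: "x \<in> {-2<..<2}"
        have "0 < (2 - x) * (2 + x)" using x by (intro mult_pos_pos) auto
        then show "4 - x\<^sup>2 \<noteq> 0" by (simp add: power2_eq_square algebra_simps)
      qed
      have b: "\<forall>x\<in>{-2<..<2::real}. - 1 \<le> x / 2 \<and> x / 2 \<le> 1" by auto
      show ?thesis
        by (intro continuous_intros continuous_on_arcsin continuous_on_powr b nz) auto
    qed
  qed auto
  moreover have "(\<lambda>x. indicator {-2<..<2} x *\<^sub>R (cos ((1 - 1 / lam) * arcsin (x / 2)) * (4 - x\<^sup>2) powr (- 1 / (2 * lam)))) = nu_dens lam"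
    by (auto simp: nu_dens_def fun_eq_iff)
  ultimately show ?thesis by simp
qed

lemma nu_sub:
  assumes lam: "lam \<ge> 1" and t: "t \<in> {-pi/2<..<pi/2}"
  shows "nu_dens lam (2 * sin t) * (2 * cos t) = Wf (1 - 1/lam) t"
proof -
  have c: "cos t > 0" using cos_pos_half[OF t] .
  have h: "cos t * cos t + sin t * sin t = 1" using sin_cos_squared_add[of t] by (simp add: power2_eq_square)
  have e1: "4 - (2 * sin t)\<^sup>2 = (2 * cos t)\<^sup>2" unfolding power2_eq_square using h by algebra
  have e2: "(2 * cos t) powr 2 = (2 * cos t)\<^sup>2" using c powr_realpow[of "2 * cos t" 2] by simp
  have e: "4 - (2 * sin t)\<^sup>2 = (2 * cos t) powr 2" using e1 e2 by simp
  have s: "2 * sin t \<in> {-2<..<2}"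
  proof -
    have "sin t < 1" "sin t > -1"
    proof -
      have "0 < (cos t)\<^sup>2" using c by simp
      then have "(sin t)\<^sup>2 < 1" using sin_cos_squared_add[of t] by linarith
      then have "\<bar>sin t\<bar> < 1" by (simp add: abs_square_less_1)
      then show "sin t < 1" "sin t > -1" by auto
    qed
    then show ?thesis by auto
  qed
  have as: "arcsin (2 * sin t / 2) = t" using t by (simp add: arcsin_sin)
  have "nu_dens lam (2 * sin t) * (2 * cos t) = cos ((1 - 1/lam) * t) * ((2 * cos t) powr (- 1 / lam) * (2 * cos t))"
    unfolding nu_dens_def e as using s by (simp add: powr_powr)
  also have "(2 * cos t) powr (- 1 / lam) * (2 * cos t) = (2 * cos t) powr (1 - 1/lam)"
  proof -
    have "(2 * cos t) powr (1 - 1/lam) = (2 * cos t) powr (-1/lam + 1)" by simp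
    also have "\<dots> = (2 * cos t) powr (-1/lam) * (2 * cos t) powr 1" by (rule powr_add)
    also have "\<dots> = (2 * cos t) powr (-1/lam) * (2 * cos t)" using c by simp
    finally show ?thesis by simp
  qed
  finally show ?thesis by (simp add: Wf_def pw_def mult.commute)
qed

lemma nu_nonneg:
  assumes lam: "lam \<ge> 1"
  shows "nu_dens lam x \<ge> 0"
proof (cases "x \<in> {-2<..<2}")
  case True
  have b: "- (pi/2) \<le> arcsin (x/2) \<and> arcsin (x/2) \<le> pi/2" using True by (intro arcsin_bounded) auto
  have a: "0 \<le> 1 - 1/lam" "1 - 1/lam \<le> 1" using lam by (auto simp: field_simps)
  have "\<bar>(1 - 1/lam) * arcsin (x/2)\<bar> \<le> 1 * \<bar>arcsin (x/2)\<bar>"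
    unfolding abs_mult using a by (intro mult_right_mono) auto
  also have "\<dots> \<le> pi/2" using b by auto
  finally have "cos ((1 - 1/lam) * arcsin (x/2)) \<ge> 0" by (intro cos_ge_zero) auto
  then show ?thesis unfolding nu_dens_def by simp
next
  case False
  then show ?thesis unfolding nu_dens_def by simp
qed

lemma nu_zero: "x \<notin> {-2<..<2} \<Longrightarrow> nu_dens lam x = 0"
  unfolding nu_dens_def by simp

lemma T_alt:
  assumes lam: "lam \<ge> 1" and z: "z > 2"
  shows "T lam z = G z * (1 - (G z)\<^sup>2) powr ((1 - 1/lam) - 1)"
proof -
  define g where "g = G z"
  have g: "0 < g" "g < 1" "sqrt (z\<^sup>2 - 4) = 1 / g - g" using G_facts[OF z] unfolding g_def by auto
  have zz: "2 * 2 < z * z" by (rule mult_strict_mono) (use z in auto)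
  have pos: "1 / g - g > 0"
  proof -
    have "1 / g > 1" using g by simp
    then show ?thesis using g by linarith
  qed
  have s: "z\<^sup>2 - 4 = (1 / g - g) powr 2"
  proof -
    have "(1 / g - g)\<^sup>2 = z\<^sup>2 - 4" unfolding g(3)[symmetric] using zz by (simp add: power2_eq_square)
    moreover have "(1 / g - g) powr 2 = (1 / g - g)\<^sup>2" using pos powr_realpow[of "1 / g - g" 2] by simp
    ultimately show ?thesis by simp
  qed
  have "(z\<^sup>2 - 4) powr (- 1 / (2 * lam)) = (1 / g - g) powr (-1/lam)"
    unfolding s powr_powr by simp
  also have "1 / g - g = (1 - g\<^sup>2) / g" using g by (simp add: field_simps power2_eq_square)
  also have "((1 - g\<^sup>2) / g) powr (-1/lam) = (1 - g\<^sup>2) powr (-1/lam) / g powr (-1/lam)"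
    by (rule powr_divide; use g in \<open>auto simp: power_less_one_iff less_imp_le abs_square_less_1\<close>)
  finally have "T lam z = g powr (1 - 1/lam) * ((1 - g\<^sup>2) powr (-1/lam) / g powr (-1/lam))"
    unfolding T_def g_def by simp
  also have "\<dots> = (g powr (1 - 1/lam) / g powr (-1/lam)) * (1 - g\<^sup>2) powr (-1/lam)" by simp
  also have "g powr (1 - 1/lam) / g powr (-1/lam) = g"
  proof -
    have "g powr (1 - 1/lam) / g powr (-1/lam) = g powr ((1 - 1/lam) - (-1/lam))" by (rule powr_diff[symmetric])
    also have "\<dots> = g" using g by simp
    finally show ?thesis .
  qed
  finally show ?thesis unfolding g_def by simp
qed

lemma T_exp:
  assumes lam: "lam \<ge> 1" and z: "z > 2"
  shows "T lam z = exp (- ((1 - 1/lam) / pi * (- pi * ln (G z)) + 1/(2*lam) * ln (z + 2) + 1/(2*lam) * ln (z - 2)))"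
proof -
  have g: "0 < G z" using G_facts[OF z] by auto
  have zz: "z\<^sup>2 - 4 = (z + 2) * (z - 2)" by (simp add: power2_eq_square algebra_simps)
  have zp: "z\<^sup>2 - 4 > 0" using z unfolding zz by simp
  have "T lam z = exp ((1 - 1/lam) * ln (G z)) * exp ((- 1 / (2 * lam)) * (ln (z + 2) + ln (z - 2)))"
    unfolding T_def using g zp z by (simp add: powr_def zz ln_mult)
  also have "\<dots> = exp (- ((1 - 1/lam) / pi * (- pi * ln (G z)) + 1/(2*lam) * ln (z + 2) + 1/(2*lam) * ln (z - 2)))"
  proof -
    have "(1 - 1/lam) / pi * (- pi * ln (G z)) = - ((1 - 1/lam) * ln (G z))" by simp
    then have "(1 - 1/lam) * ln (G z) + (- 1 / (2 * lam)) * (ln (z + 2) + ln (z - 2)) = - ((1 - 1/lam) / pi * (- pi * ln (G z)) + 1/(2*lam) * ln (z + 2) + 1/(2*lam) * ln (z - 2))"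
      by (simp add: algebra_simps add_divide_distrib)
    then show ?thesis by (simp add: exp_add[symmetric])
  qed
  finally show ?thesis .
qed

lemma tau_integral:
  assumes lam: "lam \<ge> 1" and z: "z > 2"
  shows "(\<integral>x. ln (z - x) \<partial>(tau lam)) = (1 - 1/lam) / pi * (- pi * ln (G z)) + 1/(2*lam) * ln (z + 2) + 1/(2*lam) * ln (z - 2)"
proof -
  have c1: "0 \<le> 1 - 1/lam" using lam by (simp add: field_simps)
  have hpos: "0 \<le> hT lam t" for t using c1 lam by (simp add: hT_def)
  have lnb: "\<bar>ln (z - 2 * sin t)\<bar> \<le> \<bar>ln (z - 2)\<bar> + \<bar>ln (z + 2)\<bar>" for t
  proof -
    have "sin t \<le> 1" "-1 \<le> sin t" by simp_all
    then have r: "z - 2 \<le> z - 2 * sin t" "z - 2 * sin t \<le> z + 2" by linarith+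
    have p: "z - 2 > 0" "z - 2 * sin t > 0" "z + 2 > 0" using r z by linarith+
    have "ln (z - 2) \<le> ln (z - 2 * sin t)" using r p by simp
    moreover have "ln (z - 2 * sin t) \<le> ln (z + 2)" using r p by simp
    ultimately show ?thesis by linarith
  qed
  have "(\<integral>x. ln (z - x) \<partial>(tau lam)) = (\<integral>t. ln (z - phiT t) \<partial>(density lborel (\<lambda>t. ennreal (hT lam t))))"
    unfolding tau_repr[OF lam] by (rule integral_distr) auto
  also have "\<dots> = (\<integral>t. hT lam t * ln (z - phiT t) \<partial>lborel)"
    by (subst integral_density) (auto simp: hpos)
  also have "\<dots> = (\<integral>t. (1 - 1/lam) / pi * (indicator {-pi/2<..<pi/2} t * ln (z - 2 * sin t))
       + (1/(2*lam) * ln (z + 2) * indicator {2..<3} t + 1/(2*lam) * ln (z - 2) * indicator {3..<4} t) \<partial>lborel)"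
  proof (rule Bochner_Integration.integral_cong[OF refl])
    fix t :: real
    consider "t \<in> {-pi/2<..<pi/2}" | "t \<in> {2..<3}" | "t \<in> {3..<4}" | "t \<notin> {-pi/2<..<pi/2}" "t \<notin> {2..<3}" "t \<notin> {3..<4}"
      by blast
    then show "hT lam t * ln (z - phiT t) = (1 - 1/lam) / pi * (indicator {-pi/2<..<pi/2} t * ln (z - 2 * sin t))
       + (1/(2*lam) * ln (z + 2) * indicator {2..<3} t + 1/(2*lam) * ln (z - 2) * indicator {3..<4} t)"
    proof cases
      case 1
      then have "t \<notin> {2..<3}" "t \<notin> {3..<4}" using pi_half_lt2 by auto
      moreover have "phiT t = 2 * sin t" unfolding phiT_def using 1 by auto
      ultimately show ?thesis using 1 by (simp add: hT_def)
    next
      case 2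
      then have "t \<notin> {-pi/2<..<pi/2}" "t \<notin> {3..<4}" using pi_half_lt2 by auto
      moreover have "phiT t = -2" unfolding phiT_def using 2 \<open>t \<notin> {-pi/2<..<pi/2}\<close> by auto
      ultimately show ?thesis using 2 by (simp add: hT_def)
    next
      case 3
      then have "t \<notin> {-pi/2<..<pi/2}" "t \<notin> {2..<3}" using pi_half_lt2 by auto
      moreover have "phiT t = 2" unfolding phiT_def using 3 \<open>t \<notin> {-pi/2<..<pi/2}\<close> by auto
      ultimately show ?thesis using 3 by (simp add: hT_def)
    qed (simp add: hT_def)
  qed
  also have "\<dots> = (1 - 1/lam) / pi * (\<integral>t. indicator {-pi/2<..<pi/2} t * ln (z - 2 * sin t) \<partial>lborel)
       + (1/(2*lam) * ln (z + 2) * (\<integral>t. indicator {2..<3::real} t \<partial>lborel) + 1/(2*lam) * ln (z - 2) * (\<integral>t. indicator {3..<4::real} t \<partial>lborel))"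
  proof -
    have i1: "integrable lborel (\<lambda>t. indicator {-pi/2<..<pi/2} t * ln (z - 2 * sin t))"
      by (rule int_conv0(1)[OF _ lnb]) simp
    have i2: "integrable lborel (\<lambda>t. indicator {2..<3::real} t :: real)" by (rule integrable_real_indicator) auto
    have i3: "integrable lborel (\<lambda>t. indicator {3..<4::real} t :: real)" by (rule integrable_real_indicator) auto
    have iA: "integrable lborel (\<lambda>t. (1 - 1/lam) / pi * (indicator {-pi/2<..<pi/2} t * ln (z - 2 * sin t)))"
      by (intro integrable_mult_right i1)
    have iB: "integrable lborel (\<lambda>t. 1/(2*lam) * ln (z + 2) * indicator {2..<3::real} t)"
      by (intro integrable_mult_right i2)
    have iC: "integrable lborel (\<lambda>t. 1/(2*lam) * ln (z - 2) * indicator {3..<4::real} t)"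
      by (intro integrable_mult_right i3)
    show ?thesis
      apply (subst Bochner_Integration.integral_add[OF iA Bochner_Integration.integrable_add[OF iB iC]])
      apply (subst Bochner_Integration.integral_add[OF iB iC])
      apply (simp only: integral_mult_right_zero)
      done
  qed
  also have "(\<integral>t. indicator {-pi/2<..<pi/2} t * ln (z - 2 * sin t) \<partial>lborel) = - pi * ln (G z)"
    using int_conv0(2)[OF _ lnb] log_theta[OF z] by simp
  finally show ?thesis by simp
qed



theorem mainTheorem3:
  fixes lam :: real
  assumes "lam \<ge> 1"
  shows "\<exists>\<nu> :: real measure.
           prob_space \<nu> \<and> sets \<nu> = sets borel \<and> emeasure \<nu> (- {-2..2}) = 0 \<and>
           (\<forall>z :: real. z > 2 \<longrightarrow>
              (\<integral>x. 1 / (z - x) \<partial>\<nu>) = T lam z \<and>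
              T lam z = exp (- (\<integral>x. ln (z - x) \<partial>(tau lam)))) \<and>
           (\<exists>c :: real. c > 0 \<and> \<nu> = density lborel (\<lambda>x. ennreal (c * nu_dens lam x)))"
proof -
  note lam = assms
  define a where "a = 1 - 1/lam"
  have a: "0 \<le> a" "a < 1" using lam by (auto simp: a_def field_simps)
  define c where "c = 1 / K a a"
  have Kp: "K a a > 0" by (rule K_pos[OF a])
  have c0: "c > 0" using Kp by (simp add: c_def)
  define \<nu> where "\<nu> = density lborel (\<lambda>x. ennreal (c * nu_dens lam x))"
  define I where "I = {-pi/2..pi/2::real}"
  have Im[measurable]: "I \<in> sets borel" by (simp add: I_def)
  define M where "M = density lborel (\<lambda>t. ennreal (c * Wf a t * indicator I t))"
  have rep: "\<nu> = distr M lborel (\<lambda>t. 2 * sin t)"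
  proof -
    have "\<nu> = distr (density lborel (\<lambda>t. ennreal (c * nu_dens lam (2 * sin t) * (2 * cos t) * indicator {-pi/2<..<pi/2} t))) lborel (\<lambda>t. 2 * sin t)"
      unfolding \<nu>_def by (rule subst_meas) (use c0 nu_nonneg[OF lam] nu_zero in auto)
    also have "density lborel (\<lambda>t. ennreal (c * nu_dens lam (2 * sin t) * (2 * cos t) * indicator {-pi/2<..<pi/2} t)) = M"
      unfolding M_def
    proof (rule density_cong)
      show "AE t in lborel. ennreal (c * nu_dens lam (2 * sin t) * (2 * cos t) * indicator {-pi/2<..<pi/2} t) = ennreal (c * Wf a t * indicator I t)"
      proof (intro AE_I2)
        fix t :: real
        consider "t \<in> {-pi/2<..<pi/2}" | "t = pi/2 \<or> t = -(pi/2)" | "t \<notin> I" unfolding I_def by force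
        then show "ennreal (c * nu_dens lam (2 * sin t) * (2 * cos t) * indicator {-pi/2<..<pi/2} t) = ennreal (c * Wf a t * indicator I t)"
        proof cases
          case 1
          then have "t \<in> I" unfolding I_def by auto
          then show ?thesis using 1 nu_sub[OF lam 1] by (simp add: a_def mult.assoc)
        next
          case 2
          then have "t \<notin> {-pi/2<..<pi/2}" by auto
          moreover have "Wf a t = 0" using 2 Wf_end(1)[of a] Wf_end(2)[of a] by metis
          ultimately show ?thesis by simp
        next
          case 3
          then have "t \<notin> {-pi/2<..<pi/2}" unfolding I_def by auto
          then show ?thesis using 3 by simp
        qed
      qed
    qed (auto simp: I_def)
    finally show ?thesis .
  qed
  have dnn: "0 \<le> c * Wf a t * indicator I t" for t
    using c0 Wf_nonneg[OF a, of t] by (auto simp: I_def indicator_def)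
  have intF: "(\<integral>x. F x \<partial>\<nu>) = (\<integral>t. (c * Wf a t * indicator I t) * F (2 * sin t) \<partial>lborel)"
    if [measurable]: "F \<in> borel_measurable borel" for F :: "real \<Rightarrow> real"
  proof -
    have "(\<integral>x. F x \<partial>\<nu>) = (\<integral>t. F (2 * sin t) \<partial>M)"
      unfolding rep by (rule integral_distr) (auto simp: M_def)
    also have "\<dots> = (\<integral>t. (c * Wf a t * indicator I t) * F (2 * sin t) \<partial>lborel)"
      unfolding M_def by (subst integral_density) (auto simp: dnn intro!: AE_I2)
    finally show ?thesis .
  qed
  have iW: "integrable lborel (\<lambda>t. Wf a t * indicator I t * 1)"
    unfolding I_def by (rule int_conv(1)[where B=1]) (use a in auto)
  have WI: "(\<integral>t. Wf a t * indicator I t * 1 \<partial>lborel) = K a a"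
    unfolding I_def by (subst int_conv(2)[where B=1]) (use a in \<open>auto simp: K_def Wf_def\<close>)
  have prob: "prob_space \<nu>"
  proof (rule prob_spaceI)
    have "emeasure \<nu> (space \<nu>) = emeasure M UNIV"
      unfolding rep by (simp add: emeasure_distr M_def)
    also have "\<dots> = (\<integral>\<^sup>+t. ennreal (c * Wf a t * indicator I t) \<partial>lborel)"
      unfolding M_def by (simp add: emeasure_density I_def)
    also have "\<dots> = ennreal (\<integral>t. c * Wf a t * indicator I t \<partial>lborel)"
    proof (rule nn_integral_eq_integral)
      show "integrable lborel (\<lambda>t. c * Wf a t * indicator I t)"
        using integrable_mult_right[OF iW, of c] by (simp add: mult.assoc)
    qed (use dnn in auto)
    also have "(\<integral>t. c * Wf a t * indicator I t \<partial>lborel) = c * K a a"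
      using WI by (simp add: mult.assoc)
    also have "c * K a a = 1" using Kp by (simp add: c_def)
    finally show "emeasure \<nu> (space \<nu>) = 1" by simp
  qed
  have sets: "sets \<nu> = sets borel" by (simp add: \<nu>_def)
  have supp: "emeasure \<nu> (- {-2..2}) = 0"
  proof -
    have "emeasure \<nu> (- {-2..2}) = (\<integral>\<^sup>+x. ennreal (c * nu_dens lam x) * indicator (- {-2..2}) x \<partial>lborel)"
      unfolding \<nu>_def by (rule emeasure_density) auto
    also have "(\<lambda>x. ennreal (c * nu_dens lam x) * indicator (- {-2..2}) x) = (\<lambda>x. 0)"
    proof (rule ext)
      fix x :: real
      show "ennreal (c * nu_dens lam x) * indicator (- {-2..2}) x = 0"
      proof (cases "x \<in> {-2..2}")
        case False
        then have "x \<notin> {-2<..<2}" by auto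
        then show ?thesis using False by (simp add: nu_zero)
      qed simp
    qed
    finally show ?thesis by simp
  qed
  have cauchy: "(\<integral>x. 1 / (z - x) \<partial>\<nu>) = T lam z" if z: "z > 2" for z
  proof -
    have "(\<integral>x. 1 / (z - x) \<partial>\<nu>) = (\<integral>t. (c * Wf a t * indicator I t) * (1 / (z - 2 * sin t)) \<partial>lborel)"
      by (rule intF) measurable
    also have "\<dots> = (\<integral>t. c * (Wf a t * indicator I t * (1 / (z - 2 * sin t))) \<partial>lborel)"
      by (simp only: mult.assoc)
    also have "\<dots> = c * (\<integral>t. Wf a t * indicator I t * (1 / (z - 2 * sin t)) \<partial>lborel)"
      by (rule integral_mult_right_zero)
    also have "(\<integral>t. Wf a t * indicator I t * (1 / (z - 2 * sin t)) \<partial>lborel) = K a a * (G z * (1 - (G z)\<^sup>2) powr (a - 1))"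
      unfolding I_def by (rule cauchy_theta[OF a z])
    also have "c * (K a a * (G z * (1 - (G z)\<^sup>2) powr (a - 1))) = G z * (1 - (G z)\<^sup>2) powr (a - 1)"
      using Kp by (simp add: c_def)
    also have "\<dots> = T lam z" using T_alt[OF lam z] by (simp add: a_def)
    finally show ?thesis .
  qed
  have texp: "T lam z = exp (- (\<integral>x. ln (z - x) \<partial>(tau lam)))" if z: "z > 2" for z
    using T_exp[OF lam z] tau_integral[OF lam z] by simp
  show ?thesis
    using prob sets supp cauchy texp c0 by (intro exI[of _ \<nu>]) (auto simp: \<nu>_def)
qed


end
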